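(* Let $p$ be an odd prime, $c\in\mathbb Z_p$ with $c(c^2+1)\not\equiv0\pmod p$. Then $$\Big(\sum_{k=0}^{[p/4]}\binom{4k}{2k}\Big(\frac{c^2}{16(c^2+1)}\Big)^k\Big)\Big(\sum_{k=0}^{[p/4]}\binom{4k}{2k}\frac1{(16(c^2+1))^k}\Big)\equiv\Big(\frac{2(c^2+1)}{p}\Big)\pmod p.$$
   Context: $[x]$ is the greatest integer $\le x$; $\mathbb Z_p$ is the set of rational numbers whose denominator is not divisible by $p$; $(\frac{\cdot}{p})$ is the Legendre symbol. *)

theory Defs
  imports "HOL-Number_Theory.Quadratic_Reciprocity"
begin

definition Zp :: "nat \<Rightarrow> rat set" where
  "Zp p = {x. \<not> int p dvd snd (quotient_of x)}"

definition cong_Zp :: "nat \<Rightarrow> rat \<Rightarrow> rat \<Rightarrow> bool" where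
  "cong_Zp p x y \<longleftrightarrow> (x - y) / of_nat p \<in> Zp p"

text \<open>Legendre symbol of an element a/b of Z_p (b coprime to p): the Legendre
  symbol of a * b^{-1} mod p, which equals Legendre(a*b) since (b/p)^2 = 1.\<close>
definition Legendre_rat :: "rat \<Rightarrow> nat \<Rightarrow> int" where
  "Legendre_rat x p = Legendre (fst (quotient_of x) * snd (quotient_of x)) (int p)"

end

theory Submission
  imports Defs "HOL-Number_Theory.Number_Theory"
begin


definition inR :: "real \<Rightarrow> real \<Rightarrow> bool" where
  "inR u x \<longleftrightarrow> (\<exists>A B::int. x = of_int A + of_int B * u)"

definition cR :: "nat \<Rightarrow> real \<Rightarrow> real \<Rightarrow> real \<Rightarrow> bool" where
  "cR p u x y \<longleftrightarrow> (\<exists>z. inR u z \<and> x - y = of_nat p * z)"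

lemma inR_int[simp]: "inR u (of_int a)"
  unfolding inR_def by (rule exI[of _ a], rule exI[of _ 0]) simp

lemma inR_nat[simp]: "inR u (of_nat a)"
  using inR_int[of u "int a"] by simp

lemma inR_0[simp]: "inR u 0" using inR_int[of u 0] by simp
lemma inR_1[simp]: "inR u 1" using inR_int[of u 1] by simp

lemma inR_u[simp]: "inR u u"
  unfolding inR_def by (rule exI[of _ 0], rule exI[of _ 1]) simp

lemma inR_add[simp]: assumes "inR u x" "inR u y" shows "inR u (x + y)"
proof -
  obtain A B A' B' where x: "x = of_int A + of_int B * u" and y: "y = of_int A' + of_int B' * u"
    using assms unfolding inR_def by blast
  have "x + y = of_int (A+A') + of_int (B+B') * u" unfolding x y by (simp add: algebra_simps)
  then show ?thesis unfolding inR_def by blast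
qed

lemma inR_uminus[simp]: assumes "inR u x" shows "inR u (- x)"
proof -
  obtain A B where x: "x = of_int A + of_int B * u"
    using assms unfolding inR_def by blast
  have "- x = of_int (-A) + of_int (-B) * u" unfolding x by (simp add: algebra_simps)
  then show ?thesis unfolding inR_def by blast
qed

lemma inR_diff[simp]: "inR u x \<Longrightarrow> inR u y \<Longrightarrow> inR u (x - y)"
  using inR_add[of u x "-y"] by simp

lemma inR_mult[simp]: assumes "u * u = of_int D" "inR u x" "inR u y" shows "inR u (x * y)"
proof -
  obtain A B A' B' where x: "x = of_int A + of_int B * u" and y: "y = of_int A' + of_int B' * u"
    using assms unfolding inR_def by blast
  have "x * y = of_int (A*A' + B*B'*D) + of_int (A*B' + A'*B) * u"
    unfolding x y by (simp add: algebra_simps assms(1)[symmetric])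
  then show ?thesis unfolding inR_def by blast
qed

lemma inR_pow[simp]: assumes "u * u = of_int D" "inR u x" shows "inR u (x ^ k)"
  by (induction k) (use assms in auto)

lemma inR_sum: assumes "u * u = of_int D" "\<And>i. i \<in> S \<Longrightarrow> inR u (f i)" shows "inR u (sum f S)"
  using assms(2) by (induction S rule: infinite_finite_induct) auto

lemma cR_refl[simp]: "cR p u x x"
  unfolding cR_def by (rule exI[of _ 0]) simp

lemma cR_sym: "cR p u x y \<Longrightarrow> cR p u y x"
  unfolding cR_def apply (elim exE conjE)
  subgoal for z by (rule exI[of _ "-z"]) (simp add: algebra_simps)
  done

lemma cR_trans: "cR p u x y \<Longrightarrow> cR p u y w \<Longrightarrow> cR p u x w"
  unfolding cR_def apply (elim exE conjE)
  subgoal for z z' by (rule exI[of _ "z+z'"]) (simp add: algebra_simps)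
  done

lemma cR_add: "cR p u x y \<Longrightarrow> cR p u x' y' \<Longrightarrow> cR p u (x + x') (y + y')"
  unfolding cR_def apply (elim exE conjE)
  subgoal for z z' by (rule exI[of _ "z+z'"]) (simp add: algebra_simps)
  done

lemma cR_diff: "cR p u x y \<Longrightarrow> cR p u x' y' \<Longrightarrow> cR p u (x - x') (y - y')"
  unfolding cR_def apply (elim exE conjE)
  subgoal for z z' by (rule exI[of _ "z-z'"]) (simp add: algebra_simps)
  done

lemma cR_mult_right: assumes "u * u = of_int D" "cR p u x y" "inR u w" shows "cR p u (x * w) (y * w)"
  using assms(2) unfolding cR_def apply (elim exE conjE)
  subgoal for z by (rule exI[of _ "z*w"]) (use assms in \<open>simp add: algebra_simps\<close>)
  done

lemma cR_mult_left: assumes "u * u = of_int D" "cR p u x y" "inR u w" shows "cR p u (w * x) (w * y)"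
  using cR_mult_right[OF assms] by (simp add: mult.commute)

lemma cR_mult: assumes "u * u = of_int D" "cR p u x y" "cR p u x' y'" "inR u x'" "inR u y"
  shows "cR p u (x * x') (y * y')"
  using cR_trans[OF cR_mult_right[OF assms(1,2,4)] cR_mult_left[OF assms(1,3,5)]] .

lemma cR_pmult: "inR u z \<Longrightarrow> cR p u (of_nat p * z) 0"
  unfolding cR_def by auto

lemma cR_int: "(int p) dvd (a - b) \<Longrightarrow> cR p u (of_int a) (of_int b)"
  unfolding cR_def apply (elim dvdE)
  subgoal for k by (rule exI[of _ "of_int k"]) (simp flip: of_int_diff)
  done

lemma cR_sum: assumes "\<And>i. i \<in> S \<Longrightarrow> cR p u (f i) (g i)" shows "cR p u (sum f S) (sum g S)"
  using assms by (induction S rule: infinite_finite_induct) (auto intro: cR_add)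



lemma prime_dvd_choose:
  assumes "prime (p::nat)" "0 < k" "k < p" shows "p dvd (p choose k)"
proof -
  have "k * (p choose k) = p * ((p - 1) choose (k - 1))"
    using times_binomial_minus1_eq[OF assms(2)] .
  then have "p dvd k * (p choose k)" by simp
  moreover have "\<not> p dvd k" using assms by (auto dest: dvd_imp_le)
  ultimately show ?thesis using assms(1) prime_dvd_mult_iff by blast
qed

lemma fermat_int:
  assumes "prime p" "odd p" "\<not> int p dvd b" shows "[b ^ (p - 1) = 1] (mod int p)"
proof -
  have "[nat \<bar>b\<bar> ^ (p - 1) = 1] (mod p)"
    using assms(1) proof (rule fermat_theorem)
    show "\<not> p dvd nat \<bar>b\<bar>" using assms(3)
      by (metis dvd_abs_iff int_dvd_int_iff int_nat_eq abs_ge_zero)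
  qed
  then have "nat \<bar>b\<bar> ^ (p - 1) mod p = 1 mod p"
    by (simp add: cong_def)
  then have "int (nat \<bar>b\<bar> ^ (p - 1) mod p) = int (1 mod p)"
    by simp
  moreover from assms(2) have "\<bar>b\<bar> ^ (p - Suc 0) = b ^ (p - Suc 0)"
    using assms(1) prime_gt_0_nat by (simp add: power_even_abs)
  moreover have "int p > 1" using prime_gt_1_nat[OF assms(1)] by simp
  ultimately show ?thesis
    by (auto simp add: cong_def zmod_int)
qed

lemma fermat_int2:
  assumes "prime p" "odd p" shows "[b ^ p = b] (mod int p)"
proof (cases "int p dvd b")
  case True
  moreover have "b dvd b ^ p" using assms prime_gt_0_nat dvd_power by blast
  ultimately have "int p dvd b ^ p" by (rule dvd_trans)
  then show ?thesis using True by (simp add: cong_def dvd_eq_mod_eq_0)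
next
  case False
  have "[b ^ (p - 1) * b = 1 * b] (mod int p)"
    using fermat_int[OF assms False] cong_scalar_right by blast
  moreover have "b ^ (p - 1) * b = b ^ p" using assms prime_gt_0_nat
    by (metis power_minus_mult)
  ultimately show ?thesis by simp
qed

lemma frob:
  assumes "prime p" "u * u = of_int D" "inR u x" "inR u y"
  shows "cR p u ((x + y) ^ p) (x ^ p + y ^ p)"
proof -
  have p0: "p > 0" using assms(1) prime_gt_0_nat by blast
  have "(x + y) ^ p = (\<Sum>k\<le>p. of_nat (p choose k) * x ^ k * y ^ (p - k))"
    by (rule binomial_ring)
  moreover have "cR p u (\<Sum>k\<le>p. of_nat (p choose k) * x ^ k * y ^ (p - k))
      (\<Sum>k\<le>p. (if k = 0 then y ^ p else 0) + (if k = p then x ^ p else 0))"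
  proof (rule cR_sum)
    fix k assume k: "k \<in> {..p}"
    show "cR p u (of_nat (p choose k) * x ^ k * y ^ (p - k))
        ((if k = 0 then y ^ p else 0) + (if k = p then x ^ p else 0))"
    proof (cases "k = 0 \<or> k = p")
      case True
      then show ?thesis using p0 by auto
    next
      case False
      then have "p dvd (p choose k)" using k prime_dvd_choose[OF assms(1)] by auto
      then obtain t where t: "p choose k = p * t" by blast
      have eq: "of_nat (p choose k) * x ^ k * y ^ (p - k) = of_nat p * (of_nat t * x ^ k * y ^ (p - k))"
        by (simp add: t)
      have "inR u (of_nat t * x ^ k * y ^ (p - k))"
        using assms by simp
      from cR_pmult[OF this, of p] have "cR p u (of_nat (p choose k) * x ^ k * y ^ (p - k)) 0"
        by (simp only: eq)
      then show ?thesis using False by simp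
    qed
  qed
  moreover have "(\<Sum>k\<le>p. (if k = 0 then y ^ p else 0) + (if k = p then x ^ p else (0::real)))
     = x ^ p + y ^ p"
    by (simp add: sum.distrib)
  ultimately show ?thesis by simp
qed



lemma nonsquare:
  fixes x y C :: int
  assumes "x^2 = y^2 * (C^2 + 1)" "y \<noteq> 0" "C \<noteq> 0"
  shows False
proof -
  have "y^2 dvd x^2" using assms(1) by simp
  then have "y dvd x" by simp
  then obtain t where t: "x = y * t" by blast
  have "y^2 * t^2 = y^2 * (C^2+1)" using assms(1) t by (simp add: power_mult_distrib)
  then have tt: "t^2 = C^2 + 1" using assms(2) by simp
  then have "\<bar>C\<bar> < \<bar>t\<bar>"
    by (metis abs_le_square_iff less_add_one not_le)
  then have "\<bar>C\<bar> + 1 \<le> \<bar>t\<bar>" by simp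
  then have "(\<bar>C\<bar> + 1)^2 \<le> \<bar>t\<bar>^2" by (rule power_mono) simp
  then have "(\<bar>C\<bar> + 1)^2 \<le> C^2 + 1" using tt by simp
  moreover have "\<bar>C\<bar> > 0" using assms(3) by simp
  ultimately show False by (simp add: power2_eq_square algebra_simps)
qed

lemma cR_extract:
  assumes "u = sqrt (of_int (C^2+1))" "C \<noteq> 0" "cR p u (of_int a) (of_int b)" "p > 0"
  shows "int p dvd (a - b)"
proof -
  obtain A B where AB: "of_int a - of_int b = of_nat p * (of_int A + of_int B * u)"
    using assms(3) unfolding cR_def inR_def by blast
  have "(0::real) \<le> of_int (C^2+1)" by (simp add: add_nonneg_nonneg)
  then have uu: "u * u = of_int (C^2+1)" using assms(1) by simp
  show ?thesis
  proof (cases "B = 0")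
    case True
    then have "of_int (a - b) = (of_int (int p * A) :: real)" using AB by simp
    then have "a - b = int p * A" by (simp only: of_int_eq_iff)
    then show ?thesis by simp
  next
    case False
    define x where "x = a - b - int p * A"
    define y where "y = int p * B"
    have xy: "of_int x = of_int y * u" using AB unfolding x_def y_def by (simp add: algebra_simps)
    have "(of_int (x^2) :: real) = of_int y ^ 2 * (u * u)" using xy by (simp add: power2_eq_square)
    also have "\<dots> = of_int (y^2 * (C^2+1))" using uu by simp
    finally have "x^2 = y^2 * (C^2+1)" by (simp only: of_int_eq_iff)
    moreover have "y \<noteq> 0" using False assms(4) unfolding y_def by simp
    ultimately show ?thesis using nonsquare assms(2) by blast
  qed
qed

lemma sum_even:
  fixes n :: nat
  assumes "\<And>k. odd k \<Longrightarrow> f k = 0"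
  shows "(\<Sum>k\<le>n. f k) = (\<Sum>j\<le>n div 2. f (2*j))"
proof (induction n)
  case 0 then show ?case by simp
next
  case (Suc n)
  show ?case
  proof (cases "even (Suc n)")
    case True
    then have "Suc n div 2 = Suc (n div 2)" by presburger
    moreover have "2 * Suc (n div 2) = Suc n" using True by presburger
    ultimately show ?thesis using Suc by simp
  next
    case False
    then have "Suc n div 2 = n div 2" by presburger
    then show ?thesis using Suc assms[OF False] by simp
  qed
qed

lemma binom_pm:
  fixes u :: real and c0 D :: int
  assumes uu: "u * u = of_int D"
  shows "(u + of_int c0)^n + (u - of_int c0)^n =
    2 * u ^ (n mod 2) * of_int (\<Sum>j\<le>n div 2. int (n choose (2*j)) * c0^(2*j) * D^(n div 2 - j))"
proof -
  have "(u + of_int c0)^n = (\<Sum>k\<le>n. of_nat (n choose k) * (of_int c0)^k * u^(n-k))"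
    using binomial_ring[of "of_int c0" u n] by (simp add: add.commute)
  moreover have "(u - of_int c0)^n = (\<Sum>k\<le>n. of_nat (n choose k) * (- of_int c0)^k * u^(n-k))"
    using binomial_ring[of "- of_int c0" u n] by simp
  ultimately have "(u + of_int c0)^n + (u - of_int c0)^n =
      (\<Sum>k\<le>n. of_nat (n choose k) * ((of_int c0)^k + (- of_int c0)^k) * u^(n-k))"
    by (simp add: sum.distrib[symmetric] algebra_simps)
  also have "\<dots> = (\<Sum>j\<le>n div 2. of_nat (n choose (2*j)) * ((of_int c0)^(2*j) + (- of_int c0)^(2*j)) * u^(n-2*j))"
    by (rule sum_even) simp
  also have "\<dots> = (\<Sum>j\<le>n div 2. 2 * u ^ (n mod 2) * of_int (int (n choose (2*j)) * c0^(2*j) * D^(n div 2 - j)))"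
  proof (rule sum.cong[OF refl])
    fix j assume j: "j \<in> {..n div 2}"
    have "n = 2*(n div 2) + n mod 2" by simp
    then have "n - 2*j = n mod 2 + 2 * (n div 2 - j)" using j by simp arith
    then have "u^(n-2*j) = u ^ (n mod 2) * (u*u)^(n div 2 - j)"
      by (simp add: power_add power_mult power2_eq_square)
    then show "of_nat (n choose (2*j)) * ((of_int c0)^(2*j) + (- of_int c0)^(2*j)) * u^(n-2*j) =
        2 * u ^ (n mod 2) * of_int (int (n choose (2*j)) * c0^(2*j) * D^(n div 2 - j))"
      using uu by simp
  qed
  also have "\<dots> = 2 * u ^ (n mod 2) * of_int (\<Sum>j\<le>n div 2. int (n choose (2*j)) * c0^(2*j) * D^(n div 2 - j))"
    by (simp add: sum_distrib_left)
  finally show ?thesis .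
qed



lemma frob_s:
  assumes "prime p" "odd p" "u * u = of_int D" "p = 2*n+1"
  shows "cR p u ((u + of_int m)^p) (of_int (D^n) * u + of_int m)"
proof -
  have "cR p u ((u + of_int m)^p) (u^p + (of_int m)^p)"
    by (rule frob[OF assms(1) assms(3)]) simp_all
  moreover have "u^p = of_int (D^n) * u"
    using assms(3,4) by (simp add: power_mult power2_eq_square[symmetric] power_add)
  moreover have "cR p u ((of_int m)^p) (of_int m)"
  proof -
    have "[m^p = m] (mod int p)" by (rule fermat_int2[OF assms(1,2)])
    then have "int p dvd m^p - m" by (simp add: cong_iff_dvd_diff)
    from cR_int[OF this] show ?thesis by simp
  qed
  ultimately show ?thesis
    by (metis cR_add cR_refl cR_trans)
qed

lemma key_s:
  assumes "prime p" "odd p" "u * u = of_int D" "p = 2*n+1"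
  shows "cR p u (of_int (m^2 - D) * (u + of_int m)^(2*n)) ((of_int (D^n) * u + of_int m) * (of_int m - u))"
proof -
  have "of_int (m^2 - D) * (u + of_int m)^(2*n) = (u + of_int m)^p * (of_int m - u)"
  proof -
    have "(u + of_int m) * (of_int m - u) = of_int (m^2 - D)"
      using assms(3) by (simp add: algebra_simps power2_eq_square)
    then show ?thesis using assms(4)
      by (metis (no_types, lifting) mult.assoc mult.commute power_Suc Suc_eq_plus1)
  qed
  moreover have "cR p u ((u + of_int m)^p * (of_int m - u)) ((of_int (D^n) * u + of_int m) * (of_int m - u))"
    by (rule cR_mult_right[OF assms(3) frob_s[OF assms]]) simp
  ultimately show ?thesis by simp
qed

lemma four_prod:
  fixes a b c d :: real
  shows "(2*(a*c))^n + (2*(b*d))^n + (2*(a*d))^n + (2*(b*c))^n = 2^n * ((a^n + b^n)*(c^n+d^n))"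
  by (simp add: power_mult_distrib algebra_simps)

lemma R_main:
  fixes C :: int
  assumes "prime p" "odd p" "C \<noteq> 0"
  defines "D \<equiv> C^2 + 1" and "n \<equiv> (p - 1) div 2"
  defines "P \<equiv> (\<Sum>j\<le>n div 2. int (n choose (2*j)) * C^(2*j) * D^(n div 2 - j))"
  defines "Q \<equiv> (\<Sum>j\<le>n div 2. int (n choose (2*j)) * D^(n div 2 - j))"
  shows "int p dvd (2*C) * (2^n * 4 * D^(n mod 2) * P * Q) - 4*(2*C)"
proof -
  define u where "u = sqrt (of_int D)"
  have "(0::real) \<le> of_int D" unfolding D_def by (simp add: add_nonneg_nonneg)
  then have uu: "u * u = of_int D" unfolding u_def by simp
  have pn: "p = 2*n+1" unfolding n_def using assms(2) by presburger
  define e where "e = D^n"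
  define K where "K = 2*C"
  define m1 where "m1 = C+1"
  define m2 where "m2 = -(C+1)"
  define m3 where "m3 = C-1"
  define m4 where "m4 = 1-C"
  define S where "S = (u + of_int m1)^(2*n) + (u + of_int m2)^(2*n) + (u + of_int m3)^(2*n) + (u + of_int m4)^(2*n)"
  have k1: "cR p u (of_int (m1^2 - D) * (u + of_int m1)^(2*n)) ((of_int e * u + of_int m1) * (of_int m1 - u))"
    unfolding e_def by (rule key_s[OF assms(1,2) uu pn])
  have k2: "cR p u (of_int (m2^2 - D) * (u + of_int m2)^(2*n)) ((of_int e * u + of_int m2) * (of_int m2 - u))"
    unfolding e_def by (rule key_s[OF assms(1,2) uu pn])
  have k3: "cR p u (of_int (m3^2 - D) * (u + of_int m3)^(2*n)) ((of_int e * u + of_int m3) * (of_int m3 - u))"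
    unfolding e_def by (rule key_s[OF assms(1,2) uu pn])
  have k4: "cR p u (of_int (m4^2 - D) * (u + of_int m4)^(2*n)) ((of_int e * u + of_int m4) * (of_int m4 - u))"
    unfolding e_def by (rule key_s[OF assms(1,2) uu pn])
  have eqL: "of_int K * S = of_int (m1^2 - D) * (u + of_int m1)^(2*n) + of_int (m2^2 - D) * (u + of_int m2)^(2*n)
      - of_int (m3^2 - D) * (u + of_int m3)^(2*n) - of_int (m4^2 - D) * (u + of_int m4)^(2*n)"
    unfolding S_def K_def m1_def m2_def m3_def m4_def D_def by (simp add: algebra_simps power2_eq_square)
  have eqR: "(of_int e * u + of_int m1) * (of_int m1 - u) + (of_int e * u + of_int m2) * (of_int m2 - u)
      - (of_int e * u + of_int m3) * (of_int m3 - u) - (of_int e * u + of_int m4) * (of_int m4 - u) = of_int (4*K)"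
    unfolding K_def m1_def m2_def m3_def m4_def by (simp add: algebra_simps power2_eq_square)
  have cS: "cR p u (of_int K * S) (of_int (4*K))"
    unfolding eqL eqR[symmetric] by (intro cR_add cR_diff k1 k2 k3 k4)
  have sq1: "(u + of_int m1)^2 = 2 * ((u + of_int C) * (u + 1))"
    using uu unfolding m1_def D_def by (simp add: algebra_simps power2_eq_square)
  have sq2: "(u + of_int m2)^2 = 2 * ((u - of_int C) * (u - 1))"
    using uu unfolding m2_def D_def by (simp add: algebra_simps power2_eq_square)
  have sq3: "(u + of_int m3)^2 = 2 * ((u + of_int C) * (u - 1))"
    using uu unfolding m3_def D_def by (simp add: algebra_simps power2_eq_square)
  have sq4: "(u + of_int m4)^2 = 2 * ((u - of_int C) * (u + 1))"
    using uu unfolding m4_def D_def by (simp add: algebra_simps power2_eq_square)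
  have "S = 2^n * (((u + of_int C)^n + (u - of_int C)^n) * ((u + 1)^n + (u - 1)^n))"
    unfolding S_def power_mult sq1 sq2 sq3 sq4 by (rule four_prod)
  also have "((u + of_int C)^n + (u - of_int C)^n) = 2 * u ^ (n mod 2) * of_int P"
    unfolding P_def by (rule binom_pm[OF uu])
  also have "((u + 1)^n + (u - 1)^n) = 2 * u ^ (n mod 2) * of_int Q"
    using binom_pm[OF uu, of 1 n] unfolding Q_def by simp
  finally have "S = 2^n * 4 * (u * u) ^ (n mod 2) * of_int P * of_int Q"
    by (simp add: power_mult_distrib algebra_simps)
  then have "S = of_int (2^n * 4 * D^(n mod 2) * P * Q)" using uu by simp
  then have "cR p u (of_int (K * (2^n * 4 * D^(n mod 2) * P * Q))) (of_int (4*K))"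
    using cS by simp
  from cR_extract[OF u_def[unfolded D_def] assms(3) this] show ?thesis
    using assms(1) prime_gt_0_nat K_def by blast
qed



lemma cop_int: assumes "prime (p::nat)" "\<not> int p dvd k" shows "coprime k (int p)"
proof -
  have "prime (int p)" using assms(1) by simp
  then have "coprime (int p) k" using assms(2) prime_imp_coprime by blast
  then show ?thesis by (simp add: coprime_commute)
qed

lemma central_aux:
  fixes j X Y B :: nat
  assumes "Suc j * X = Suc(Suc(2*j)) * Y" "Suc(2*j)*B = Y * Suc j"
  shows "Suc j * X = 2*Suc(2*j)*B"
proof -
  have "Suc j * X = 2 * (Y * Suc j)" using assms(1) by (simp add: algebra_simps)
  then show ?thesis using assms(2) by (simp add: algebra_simps)
qed

lemma central_step:
  "Suc j * (Suc (Suc (2*j)) choose Suc j) = 2*Suc(2*j) * ((2*j) choose j)"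
proof -
  have a: "Suc j * (Suc (Suc (2*j)) choose Suc j) = Suc (Suc (2*j)) * (Suc (2*j) choose j)"
    by (rule Suc_times_binomial)
  have b: "Suc (2*j) * ((2*j) choose j) = (Suc (2*j) choose Suc j) * Suc j"
    by (rule Suc_times_binomial_eq)
  have c: "(Suc (2*j) choose Suc j) = (Suc (2*j) choose j)"
    using binomial_symmetric[of "Suc j" "Suc (2*j)"] by simp
  show ?thesis using central_aux[OF a b[unfolded c]] .
qed

lemma binom_step2: "(j+1) * (n choose (j+1)) = (n - j) * (n choose j)"
proof -
  have "(j+1) * (n choose (j+1)) = n * ((n - 1) choose j)"
    using times_binomial_minus1_eq[of "j+1" n] by simp
  also have "\<dots> = (n - j) * (n choose j)" using binomial_absorb_comp[of n j] by simp
  finally show ?thesis .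
qed

lemma central_binom_mod:
  assumes "prime p" "p = 2*n+1" "j \<le> n"
  shows "[int ((2*j) choose j) = (-4)^j * int (n choose j)] (mod int p)"
  using assms(3)
proof (induction j)
  case 0 then show ?case by simp
next
  case (Suc j)
  then have IH: "[int ((2*j) choose j) = (-4)^j * int (n choose j)] (mod int p)" by simp
  have "2 * Suc j = Suc (Suc (2*j))" by simp
  then have "int (j+1) * int ((2*(j+1)) choose (j+1)) = 2*(2*int j+1) * int ((2*j) choose j)"
    using arg_cong[OF central_step[of j], of int] by (simp del: binomial_Suc_Suc add: algebra_simps)
  moreover have "[2*(2*int j+1) * int ((2*j) choose j) = 2*(2*int j+1) * ((-4)^j * int (n choose j))] (mod int p)"
    using IH by (rule cong_scalar_left)
  moreover have "int (j+1) * ((-4)^(j+1) * int (n choose (j+1))) = (-4)^j * (-4 * int (n - j)) * int (n choose j)"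
  proof -
    have h: "int (j+1) * int (n choose (j+1)) = int (n - j) * int (n choose j)"
      by (metis of_nat_mult binom_step2)
    have "int (j+1) * ((-4)^(j+1) * int (n choose (j+1))) = (-4)^(j+1) * (int (j+1) * int (n choose (j+1)))"
      by (simp only: mult_ac)
    also have "\<dots> = (-4)^(j+1) * (int (n - j) * int (n choose j))" by (simp only: h)
    also have "\<dots> = (-4)^j * (-4 * int (n - j)) * int (n choose j)" by (simp add: mult_ac)
    finally show ?thesis .
  qed
  moreover have "[(-4)^j * (-4 * int (n - j)) * int (n choose j) = (-4)^j * (2*(2*int j+1)) * int (n choose j)] (mod int p)"
  proof -
    have "-4 * int (n - j) = 2*(2*int j+1) + int p * (-2)" using Suc.prems assms(2) by simp
    then have "[-4 * int (n - j) = 2*(2*int j+1)] (mod int p)"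
      by (simp add: cong_iff_lin)
    then show ?thesis by (intro cong_scalar_right cong_scalar_left)
  qed
  ultimately have X: "[int (j+1) * int ((2*(j+1)) choose (j+1)) = int (j+1) * ((-4)^(j+1) * int (n choose (j+1)))] (mod int p)"
    by (smt (verit, ccfv_threshold) cong_sym cong_trans mult.assoc mult.commute)
  moreover have cop: "coprime (int (j+1)) (int p)"
  proof (rule cop_int[OF assms(1)])
    show "\<not> int p dvd int (j+1)" using Suc.prems assms(2) by (auto dest: zdvd_imp_le)
  qed
  have "[int ((2*(j+1)) choose (j+1)) = (-4)^(j+1) * int (n choose (j+1))] (mod int p)"
    using cong_mult_lcancel[OF cop] X by blast
  then show ?case by (simp only: Suc_eq_plus1)
qed



lemma reduce_sum:
  fixes C E D :: int and p n :: nat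
  assumes "prime p" "p = 2*n+1" "[D * (16 * E) = 1] (mod int p)"
  shows "[D^(n div 2) * (\<Sum>k=0..n div 2. int ((4*k) choose (2*k)) * (C^2 * E)^k)
     = (\<Sum>j\<le>n div 2. int (n choose (2*j)) * C^(2*j) * D^(n div 2 - j))] (mod int p)"
proof -
  have "D^(n div 2) * (\<Sum>k=0..n div 2. int ((4*k) choose (2*k)) * (C^2 * E)^k)
      = (\<Sum>k\<le>n div 2. D^(n div 2) * (int ((4*k) choose (2*k)) * (C^2 * E)^k))"
    by (simp add: sum_distrib_left atLeast0AtMost)
  moreover have "[(\<Sum>k\<le>n div 2. D^(n div 2) * (int ((4*k) choose (2*k)) * (C^2 * E)^k))
     = (\<Sum>j\<le>n div 2. int (n choose (2*j)) * C^(2*j) * D^(n div 2 - j))] (mod int p)"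
  proof (rule cong_sum)
    fix k assume k: "k \<in> {..n div 2}"
    have "[int ((2*(2*k)) choose (2*k)) = (-4)^(2*k) * int (n choose (2*k))] (mod int p)"
      by (rule central_binom_mod[OF assms(1,2)]) (use k in auto)
    then have c1: "[int ((4*k) choose (2*k)) = 16^k * int (n choose (2*k))] (mod int p)"
      by (simp add: power_mult)
    have dk: "D^(n div 2) = D^(n div 2 - k) * D^k" using k by (simp flip: power_add)
    have m1: "D^(n div 2) * (int ((4*k) choose (2*k)) * (C^2 * E)^k)
       = int ((4*k) choose (2*k)) * C^(2*k) * D^(n div 2 - k) * E^k * D^k"
    proof -
      have ck: "(C^2*E)^k = C^(2*k)*E^k" by (simp add: power_mult_distrib power_mult)
      show ?thesis unfolding dk ck by (simp add: algebra_simps)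
    qed
    have m2: "[int ((4*k) choose (2*k)) * C^(2*k) * D^(n div 2 - k) * E^k * D^k
       = int (n choose (2*k)) * C^(2*k) * D^(n div 2 - k) * (D * (16 * E))^k] (mod int p)"
    proof -
      have "[int ((4*k) choose (2*k)) * C^(2*k) * D^(n div 2 - k) * E^k * D^k
        = 16^k * int (n choose (2*k)) * C^(2*k) * D^(n div 2 - k) * E^k * D^k] (mod int p)"
        using c1 by (intro cong_scalar_right) 
      then show ?thesis by (simp add: power_mult_distrib algebra_simps)
    qed
    have m3: "[int (n choose (2*k)) * C^(2*k) * D^(n div 2 - k) * (D * (16 * E))^k
       = int (n choose (2*k)) * C^(2*k) * D^(n div 2 - k) * 1^k] (mod int p)"
      using assms(3) by (intro cong_scalar_left cong_pow)
    show "[D^(n div 2) * (int ((4*k) choose (2*k)) * (C^2 * E)^k)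
       = int (n choose (2*k)) * C^(2*k) * D^(n div 2 - k)] (mod int p)"
      using cong_trans[OF m2 m3] unfolding m1 by (simp only: power_one mult_1_right)
  qed
  ultimately show ?thesis by simp
qed

lemma int_main:
  fixes C E :: int and p :: nat
  assumes "prime p" "odd p" "\<not> int p dvd C" "\<not> int p dvd (C^2+1)"
    and "[(C^2+1) * (16 * E) = 1] (mod int p)"
  shows "[(\<Sum>k=0..p div 4. int ((4*k) choose (2*k)) * (C^2 * E)^k) *
          (\<Sum>k=0..p div 4. int ((4*k) choose (2*k)) * E^k) = (2*(C^2+1))^((p-1) div 2)] (mod int p)"
proof -
  define D where "D = C^2 + 1"
  define n where "n = (p - 1) div 2"
  define P where "P = (\<Sum>j\<le>n div 2. int (n choose (2*j)) * C^(2*j) * D^(n div 2 - j))"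
  define Q where "Q = (\<Sum>j\<le>n div 2. int (n choose (2*j)) * D^(n div 2 - j))"
  define T1 where "T1 = (\<Sum>k=0..n div 2. int ((4*k) choose (2*k)) * (C^2 * E)^k)"
  define T2 where "T2 = (\<Sum>k=0..n div 2. int ((4*k) choose (2*k)) * E^k)"
  have pn: "p = 2*n+1" unfolding n_def using assms(2) by presburger
  have p4: "p div 4 = n div 2" using pn by presburger
  have C0: "C \<noteq> 0" using assms(3) by auto
  have h1: "[D^(n div 2) * T1 = P] (mod int p)"
    unfolding T1_def P_def by (rule reduce_sum[OF assms(1) pn]) (use assms(5) D_def in simp)
  have h2: "[D^(n div 2) * T2 = Q] (mod int p)"
    using reduce_sum[OF assms(1) pn, of D E 1] assms(5) unfolding T2_def Q_def D_def by simp
  have "int p dvd (2*C) * (2^n * 4 * D^(n mod 2) * P * Q) - 4*(2*C)"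
    using R_main[OF assms(1,2) C0] unfolding P_def Q_def D_def n_def by simp
  then have "[(8*C) * (2^n * D^(n mod 2) * P * Q) = (8*C) * 1] (mod int p)"
    by (simp add: cong_iff_dvd_diff algebra_simps)
  moreover have "coprime (8*C) (int p)"
  proof (rule cop_int[OF assms(1)])
    have "\<not> int p dvd 8"
    proof
      assume "int p dvd 8"
      then have "int p dvd 2^3" by simp
      moreover have "prime (int p)" using assms(1) by simp
      ultimately have "int p dvd 2" using prime_dvd_power by blast
      then have "p dvd 2" by presburger
      then show False using dvd_imp_le[of p 2] prime_gt_1_nat[OF assms(1)] assms(2) by (cases "p = 2") auto
    qed
    moreover have "prime (int p)" using assms(1) by simp
    ultimately show "\<not> int p dvd 8 * C" using assms(3) prime_dvd_mult_iff by blast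
  qed
  ultimately have k1: "[2^n * D^(n mod 2) * P * Q = 1] (mod int p)"
    using cong_mult_lcancel by blast
  have cc: "[2^n * D^(n mod 2) * (D^(n div 2) * T1) * (D^(n div 2) * T2) = 2^n * D^(n mod 2) * P * Q] (mod int p)"
    using h1 h2 by (intro cong_mult cong_refl)
  have ee: "2^n * D^(n mod 2) * (D^(n div 2) * T1) * (D^(n div 2) * T2) = (2*D)^n * (T1 * T2)"
  proof -
    have "D^(n mod 2) * D^(n div 2) * D^(n div 2) = D^n"
    proof -
      have "n = n mod 2 + n div 2 + n div 2" by presburger
      then have "D^n = D^(n mod 2 + n div 2 + n div 2)" by simp
      then show ?thesis by (simp only: power_add)
    qed
    then show ?thesis by (simp add: power_mult_distrib algebra_simps)
  qed
  have k2: "[(2*D)^n * (T1 * T2) = 1] (mod int p)" using cong_trans[OF cc k1] unfolding ee .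
  have "\<not> int p dvd 2*D"
  proof
    assume "int p dvd 2*D"
    then have "int p dvd 2 \<or> int p dvd D" using assms(1) by (simp add: prime_dvd_mult_iff)
    moreover have "\<not> int p dvd 2"
    proof
      assume "int p dvd 2" then have "p dvd 2" by presburger
      then show False using dvd_imp_le[of p 2] prime_gt_1_nat[OF assms(1)] assms(2) by (cases "p = 2") auto
    qed
    ultimately show False using assms(4) D_def by simp
  qed
  from fermat_int[OF assms(1,2) this] have "[(2*D)^(2*n) = 1] (mod int p)" using pn by simp
  then have f1: "[(2*D)^(2*n) * (T1*T2) = 1 * (T1*T2)] (mod int p)" by (rule cong_scalar_right)
  have f2: "[(2*D)^(2*n) * (T1*T2) = (2*D)^n * 1] (mod int p)"
  proof -
    have "(2*D)^(2*n) = (2*D)^n * (2*D)^n" by (simp only: mult_2 power_add)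
    then have eq: "(2*D)^(2*n) * (T1*T2) = (2*D)^n * ((2*D)^n * (T1 * T2))" by (simp only: mult.assoc)
    show ?thesis unfolding eq by (rule cong_scalar_left[OF k2])
  qed
  have "[1 * (T1 * T2) = (2*D)^n * 1] (mod int p)" using cong_trans[OF cong_sym[OF f1] f2] .
  then have "[T1 * T2 = (2*D)^n] (mod int p)" by simp
  then show ?thesis unfolding T1_def T2_def D_def n_def p4[unfolded n_def] .
qed



lemma Zp_iff:
  assumes "prime p"
  shows "x \<in> Zp p \<longleftrightarrow> (\<exists>a b. \<not> int p dvd b \<and> x = of_int a / of_int b)"
proof
  assume "x \<in> Zp p"
  then have "\<not> int p dvd snd (quotient_of x)" unfolding Zp_def by simp
  moreover have "x = of_int (fst (quotient_of x)) / of_int (snd (quotient_of x))"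
    using quotient_of_div[of x "fst (quotient_of x)" "snd (quotient_of x)"] by simp
  ultimately show "\<exists>a b. \<not> int p dvd b \<and> x = of_int a / of_int b" by blast
next
  assume "\<exists>a b. \<not> int p dvd b \<and> x = of_int a / of_int b"
  then obtain a b where ab: "\<not> int p dvd b" "x = of_int a / of_int b" by blast
  have b0: "b \<noteq> 0" using ab(1) by auto
  obtain a' b' where q: "quotient_of x = (a', b')" by fastforce
  have b'0: "b' > 0" using quotient_of_denom_pos[OF q] .
  have cop: "coprime a' b'" using quotient_of_coprime[OF q] .
  have "x = of_int a' / of_int b'" using quotient_of_div[OF q] .
  then have "(of_int a' / of_int b' :: rat) = of_int a / of_int b" using ab by simp
  then have "(of_int (a' * b) :: rat) = of_int (a * b')" using b0 b'0
    by (simp add: field_simps)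
  then have "a' * b = a * b'" by (simp only: of_int_eq_iff)
  then have "b' dvd a' * b" by (metis dvd_triv_right)
  then have "b' dvd b" using cop by (simp add: coprime_commute coprime_dvd_mult_right_iff)
  then have "\<not> int p dvd b'" using ab(1) dvd_trans by blast
  then show "x \<in> Zp p" unfolding Zp_def using q by simp
qed

lemma Zp_int[simp]: assumes "prime p" shows "of_int a \<in> Zp p"
proof -
  have "\<not> int p dvd 1" using prime_gt_1_nat[OF assms] by simp
  moreover have "(of_int a :: rat) = of_int a / of_int 1" by simp
  ultimately have "\<exists>a' b. \<not> int p dvd b \<and> (of_int a :: rat) = of_int a' / of_int b" by blast
  then show ?thesis unfolding Zp_iff[OF assms] .
qed

lemma Zp_nat[simp]: "prime p \<Longrightarrow> of_nat a \<in> Zp p"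
  using Zp_int[of p "int a"] by simp

lemma Zp_add[simp]: assumes "prime p" "x \<in> Zp p" "y \<in> Zp p" shows "x + y \<in> Zp p"
proof -
  obtain a b a' b' where h: "\<not> int p dvd b" "x = of_int a / of_int b" "\<not> int p dvd b'" "y = of_int a' / of_int b'"
    using assms(2,3) unfolding Zp_iff[OF assms(1)] by blast
  have "b \<noteq> 0" "b' \<noteq> 0" using h by auto
  then have "x + y = of_int (a*b' + a'*b) / of_int (b*b')" unfolding h(2,4) by (simp add: field_simps)
  moreover have "prime (int p)" using assms(1) by simp
  then have "\<not> int p dvd b*b'" using h(1,3) prime_dvd_mult_iff by blast
  ultimately
  show ?thesis unfolding Zp_iff[OF assms(1)] by blast
qed

lemma Zp_mult[simp]: assumes "prime p" "x \<in> Zp p" "y \<in> Zp p" shows "x * y \<in> Zp p"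
proof -
  obtain a b a' b' where h: "\<not> int p dvd b" "x = of_int a / of_int b" "\<not> int p dvd b'" "y = of_int a' / of_int b'"
    using assms(2,3) unfolding Zp_iff[OF assms(1)] by blast
  have "b \<noteq> 0" "b' \<noteq> 0" using h by auto
  then have "x * y = of_int (a*a') / of_int (b*b')" unfolding h(2,4) by (simp add: field_simps)
  moreover have "prime (int p)" using assms(1) by simp
  then have "\<not> int p dvd b*b'" using h(1,3) prime_dvd_mult_iff by blast
  ultimately
  show ?thesis unfolding Zp_iff[OF assms(1)] by blast
qed

lemma Zp_minus[simp]: assumes "prime p" "x \<in> Zp p" shows "- x \<in> Zp p"
  using Zp_mult[OF assms(1) Zp_int[OF assms(1), of "-1"] assms(2)] by simp

lemma Zp_diff[simp]: assumes "prime p" "x \<in> Zp p" "y \<in> Zp p" shows "x - y \<in> Zp p"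
  using Zp_add[OF assms(1,2) Zp_minus[OF assms(1,3)]] by simp

lemma Zp_pow[simp]: assumes "prime p" "x \<in> Zp p" shows "x ^ k \<in> Zp p"
  by (induction k) (use assms Zp_int[OF assms(1), of 1] in auto)

lemma Zp_sum: assumes "prime p" "\<And>i. i \<in> S \<Longrightarrow> f i \<in> Zp p" shows "sum f S \<in> Zp p"
  using assms(2) by (induction S rule: infinite_finite_induct) (use assms(1) Zp_int[OF assms(1), of 0] in auto)

lemma cZ_refl[simp]: "prime p \<Longrightarrow> cong_Zp p x x"
  unfolding cong_Zp_def using Zp_int[of p 0] by simp

lemma cZ_sym: "prime p \<Longrightarrow> cong_Zp p x y \<Longrightarrow> cong_Zp p y x"
  unfolding cong_Zp_def using Zp_minus[of p "(x - y) / of_nat p"] by (simp add: minus_divide_left)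

lemma cZ_trans: "prime p \<Longrightarrow> cong_Zp p x y \<Longrightarrow> cong_Zp p y z \<Longrightarrow> cong_Zp p x z"
  unfolding cong_Zp_def using Zp_add[of p "(x - y) / of_nat p" "(y - z) / of_nat p"]
  by (simp add: add_divide_distrib[symmetric])

lemma cZ_add: "prime p \<Longrightarrow> cong_Zp p x y \<Longrightarrow> cong_Zp p x' y' \<Longrightarrow> cong_Zp p (x + x') (y + y')"
  unfolding cong_Zp_def using Zp_add[of p "(x - y) / of_nat p" "(x' - y') / of_nat p"]
  by (simp add: add_divide_distrib[symmetric] algebra_simps)

lemma cZ_mult:
  assumes "prime p" "cong_Zp p x y" "cong_Zp p z w" "z \<in> Zp p" "y \<in> Zp p"
  shows "cong_Zp p (x * z) (y * w)"
proof -
  have "(x * z - y * w) / of_nat p = ((x - y) * z + y * (z - w)) / of_nat p"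
    by (simp add: algebra_simps)
  also have "\<dots> = ((x - y) / of_nat p) * z + y * ((z - w) / of_nat p)"
    by (simp add: add_divide_distrib)
  finally have eq: "(x * z - y * w) / of_nat p = ((x - y) / of_nat p) * z + y * ((z - w) / of_nat p)" .
  have "((x - y) / of_nat p) * z + y * ((z - w) / of_nat p) \<in> Zp p"
    using assms unfolding cong_Zp_def by (intro Zp_add Zp_mult) simp_all
  then show ?thesis unfolding cong_Zp_def eq .
qed

lemma cZ_pow:
  assumes "prime p" "cong_Zp p x y" "x \<in> Zp p" "y \<in> Zp p"
  shows "cong_Zp p (x ^ k) (y ^ k)"
proof (induction k)
  case 0 then show ?case using assms by simp
next
  case (Suc k)
  have "cong_Zp p (x * x ^ k) (y * y ^ k)"
    by (rule cZ_mult[OF assms(1,2) Suc]) (use assms in simp_all)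
  then show ?case by simp
qed

lemma cZ_sum:
  assumes "prime p" "\<And>i. i \<in> S \<Longrightarrow> cong_Zp p (f i) (g i)"
  shows "cong_Zp p (sum f S) (sum g S)"
  using assms(2) by (induction S rule: infinite_finite_induct) (use assms(1) in \<open>auto intro: cZ_add\<close>)

lemma cZ_int:
  assumes "prime p" "[a = b] (mod int p)"
  shows "cong_Zp p (of_int a) (of_int b)"
proof -
  obtain k where k: "a - b = int p * k" using assms(2) by (metis cong_iff_dvd_diff dvdE)
  have "p > 0" using assms(1) prime_gt_0_nat by blast
  then have "(of_int a - of_int b) / of_nat p = (of_int k :: rat)"
    using arg_cong[OF k, of "of_int :: int \<Rightarrow> rat"] by (simp add: field_simps)
  then show ?thesis unfolding cong_Zp_def using assms(1) by simp
qed

lemma cZ_int_rev: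
  assumes "prime p" "cong_Zp p (of_int a) (of_int b)"
  shows "[a = b] (mod int p)"
proof -
  obtain s t where st: "\<not> int p dvd t" "(of_int a - of_int b) / of_nat p = (of_int s / of_int t :: rat)"
    using assms unfolding cong_Zp_def Zp_iff[OF assms(1)] by blast
  have "p > 0" using assms(1) prime_gt_0_nat by blast
  moreover have "t \<noteq> 0" using st(1) by auto
  ultimately have "(of_int ((a - b) * t) :: rat) = of_int (int p * s)"
    using st(2) by (simp add: field_simps)
  then have "(a - b) * t = int p * s" by (simp only: of_int_eq_iff)
  then have "int p dvd (a - b) * t" by simp
  moreover have "prime (int p)" using assms(1) by simp
  ultimately have "int p dvd (a - b)" using st(1) prime_dvd_mult_iff by blast
  then show ?thesis by (simp add: cong_iff_dvd_diff)
qed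

lemma reduce_Zp:
  assumes "prime p" "c \<in> Zp p"
  obtains C :: int where "cong_Zp p c (of_int C)"
proof -
  obtain a b where ab: "\<not> int p dvd b" "c = of_int a / of_int b" using assms(2) unfolding Zp_iff[OF assms(1)] by blast
  have "coprime b (int p)" using cop_int[OF assms(1) ab(1)] .
  then obtain b' where b': "[b * b' = 1] (mod int p)" using cong_solve_coprime_int by blast
  then obtain k where k: "1 - b * b' = int p * k" by (metis cong_iff_dvd_diff dvdE cong_sym)
  have b0: "b \<noteq> 0" using ab(1) by auto
  have "p > 0" using assms(1) prime_gt_0_nat by blast
  have "(c - of_int (a * b')) / of_nat p = of_int (a * k) / of_int b"
  proof -
    have "(of_int (1 - b * b') :: rat) = of_int (int p * k)" using k by simp
    then have "(1::rat) - of_int b * of_int b' = of_nat p * of_int k" by simp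
    then have e: "of_int b * of_int b' = (1::rat) - of_nat p * of_int k" by simp
    have "(of_int a / of_int b - of_int (a * b')) = (of_int a * (1 - of_int b * of_int b')) / (of_int b :: rat)"
      using b0 by (simp add: field_simps)
    also have "\<dots> = of_nat p * (of_int (a * k) / of_int b)" unfolding e by simp
    finally show ?thesis unfolding ab(2) using \<open>p > 0\<close> by simp
  qed
  then have "cong_Zp p c (of_int (a * b'))"
    unfolding cong_Zp_def Zp_iff[OF assms(1)] using ab(1) by blast
  then show ?thesis using that by blast
qed



lemma Zp_1[simp]: "prime p \<Longrightarrow> 1 \<in> Zp p" using Zp_int[of p 1] by simp
lemma Zp_0[simp]: "prime p \<Longrightarrow> 0 \<in> Zp p" using Zp_int[of p 0] by simp
lemma Zp_numeral[simp]: "prime p \<Longrightarrow> numeral k \<in> Zp p" using Zp_int[of p "numeral k"] by simp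

lemma inv_Zp:
  assumes "prime p" "w \<in> Zp p" "cong_Zp p w (of_int W)" "[W * E = 1] (mod int p)"
  shows "1 / w \<in> Zp p" "cong_Zp p (1 / w) (of_int E)"
proof -
  obtain a b where ab: "\<not> int p dvd b" "w = of_int a / of_int b"
    using assms(2) unfolding Zp_iff[OF assms(1)] by blast
  have b0: "b \<noteq> 0" using ab(1) by auto
  have pa: "\<not> int p dvd a"
  proof
    assume "int p dvd a"
    then obtain t where t: "a = int p * t" by blast
    have "p > 0" using assms(1) prime_gt_0_nat by blast
    then have "(w - 0) / of_nat p = of_int t / of_int b" unfolding ab(2) t by simp
    then have "cong_Zp p w 0" unfolding cong_Zp_def Zp_iff[OF assms(1)] using ab(1) by blast
    then have "cong_Zp p 0 (of_int W)" by (rule cZ_trans[OF assms(1) cZ_sym[OF assms(1)] assms(3)])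
    then have "cong_Zp p (of_int 0) (of_int W)" by simp
    then have "[0 = W] (mod int p)" by (rule cZ_int_rev[OF assms(1)])
    then have "[0 * E = W * E] (mod int p)" by (rule cong_scalar_right)
    then have "[0 = W * E] (mod int p)" by simp
    from cong_trans[OF this assms(4)] have "[0 = 1] (mod int p)" .
    then show False using prime_gt_1_nat[OF assms(1)] by (simp add: cong_def)
  qed
  then have a0: "a \<noteq> 0" by auto
  have w0: "w \<noteq> 0" using a0 b0 ab(2) by simp
  have "1 / w = of_int b / of_int a" using ab(2) by simp
  then show inZ: "1 / w \<in> Zp p" unfolding Zp_iff[OF assms(1)] using pa by blast
  have "cong_Zp p (w * of_int E) (of_int W * of_int E)"
    by (rule cZ_mult[OF assms(1,3)]) (use assms(1) in simp_all)
  moreover have "cong_Zp p (of_int (W * E)) (of_int 1)" by (rule cZ_int[OF assms(1,4)])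
  then have "cong_Zp p (of_int W * of_int E) 1" by simp
  ultimately have "cong_Zp p (w * of_int E) 1" by (rule cZ_trans[OF assms(1)])
  then have "cong_Zp p (1 / w * (w * of_int E)) (1 / w * 1)"
    by (intro cZ_mult[OF assms(1)] cZ_refl[OF assms(1)] inZ) (use assms in simp_all)
  then show "cong_Zp p (1 / w) (of_int E)" using w0 cZ_sym[OF assms(1)] by simp
qed

lemma not_dvd_small:
  assumes "prime p" "odd p" shows "\<not> int p dvd 2"
proof
  assume "int p dvd 2" then have "p dvd 2" by presburger
  then show False using dvd_imp_le[of p 2] prime_gt_1_nat[OF assms(1)] assms(2) by (cases "p = 2") auto
qed

theorem corollary2p1:
  fixes p :: nat and c :: rat
  assumes "prime p" and "odd p" and "c \<in> Zp p"
    and "\<not> cong_Zp p (c * (c^2 + 1)) 0"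
  shows "cong_Zp p
    ((\<Sum>k = 0..p div 4. of_nat ((4*k) choose (2*k)) * (c^2 / (16 * (c^2 + 1)))^k) *
     (\<Sum>k = 0..p div 4. of_nat ((4*k) choose (2*k)) / (16 * (c^2 + 1))^k))
    (of_int (Legendre_rat (2 * (c^2 + 1)) p))"
proof -
  note pp = assms(1)
  have pint: "prime (int p)" using pp by simp
  obtain C where hC: "cong_Zp p c (of_int C)" using reduce_Zp[OF pp assms(3)] by blast
  define D where "D = C^2 + 1"
  define n where "n = (p - 1) div 2"
  have hc2: "cong_Zp p (c^2) (of_int (C^2))"
    using cZ_pow[OF pp hC assms(3) Zp_int[OF pp], of 2] by simp
  have hD: "cong_Zp p (c^2 + 1) (of_int D)"
    using cZ_add[OF pp hc2 cZ_refl[OF pp, of 1]] unfolding D_def by simp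
  have "cong_Zp p (c * (c^2 + 1)) (of_int C * of_int D)"
    by (rule cZ_mult[OF pp hC hD]) (use pp assms(3) in simp_all)
  then have hx: "cong_Zp p (c * (c^2 + 1)) (of_int (C * D))" by simp
  have ndvd: "\<not> int p dvd C * D"
  proof
    assume "int p dvd C * D"
    then have "[C * D = 0] (mod int p)" by (simp add: cong_0_iff)
    then have "cong_Zp p (of_int (C * D)) (of_int 0)" by (rule cZ_int[OF pp])
    then have "cong_Zp p (of_int (C * D)) 0" by simp
    from cZ_trans[OF pp hx this] have "cong_Zp p (c * (c^2 + 1)) 0" .
    then show False using assms(4) by simp
  qed
  then have nC: "\<not> int p dvd C" and nD: "\<not> int p dvd D"
    using prime_dvd_mult_iff[OF pint] by auto
  have n2: "\<not> int p dvd 2" by (rule not_dvd_small[OF pp assms(2)])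
  have n16: "\<not> int p dvd 16 * D"
  proof
    assume "int p dvd 16 * D"
    then have "int p dvd 2^4 \<or> int p dvd D" using prime_dvd_mult_iff[OF pint] by simp
    then have "int p dvd 2 \<or> int p dvd D" using prime_dvd_power[OF pint] by blast
    then show False using n2 nD by blast
  qed
  obtain E where hE: "[(16 * D) * E = 1] (mod int p)"
    using cong_solve_coprime_int[OF cop_int[OF pp n16]] by blast
  define w where "w = 16 * (c^2 + 1)"
  have wZ: "w \<in> Zp p" unfolding w_def using pp assms(3) by simp
  have hw: "cong_Zp p w (of_int (16 * D))"
    unfolding w_def using cZ_mult[OF pp cZ_refl[OF pp, of 16] hD] pp assms(3) by simp
  have iZ: "1 / w \<in> Zp p" and hi: "cong_Zp p (1 / w) (of_int E)"
    using inv_Zp[OF pp wZ hw hE] by auto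
  define T1 where "T1 = (\<Sum>k=0..p div 4. int ((4*k) choose (2*k)) * (C^2 * E)^k)"
  define T2 where "T2 = (\<Sum>k=0..p div 4. int ((4*k) choose (2*k)) * E^k)"
  have hq: "cong_Zp p (c^2 * (1 / w)) (of_int (C^2 * E))"
    unfolding of_int_mult by (rule cZ_mult[OF pp hc2 hi iZ Zp_int[OF pp]])
  have cwZ: "c^2 * (1/w) \<in> Zp p" by (rule Zp_mult[OF pp Zp_pow[OF pp assms(3)] iZ])
  have S1: "cong_Zp p (\<Sum>k = 0..p div 4. of_nat ((4*k) choose (2*k)) * (c^2 / (16 * (c^2 + 1)))^k) (of_int T1)"
    unfolding T1_def of_int_sum
  proof (rule cZ_sum[OF pp])
    fix k
    have "cong_Zp p ((c^2 * (1 / w))^k) (of_int (C^2 * E) ^ k)"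
      by (rule cZ_pow[OF pp hq cwZ Zp_int[OF pp]])
    then have "cong_Zp p (of_nat ((4*k) choose (2*k)) * (c^2 * (1 / w))^k) (of_nat ((4*k) choose (2*k)) * of_int (C^2 * E) ^ k)"
      by (rule cZ_mult[OF pp cZ_refl[OF pp] _ Zp_pow[OF pp cwZ] Zp_nat[OF pp]])
    then show "cong_Zp p (of_nat ((4*k) choose (2*k)) * (c^2 / (16 * (c^2 + 1)))^k)
       (of_int (int ((4*k) choose (2*k)) * (C^2 * E)^k))"
      unfolding w_def by simp
  qed
  have S2: "cong_Zp p (\<Sum>k = 0..p div 4. of_nat ((4*k) choose (2*k)) / (16 * (c^2 + 1))^k) (of_int T2)"
    unfolding T2_def of_int_sum
  proof (rule cZ_sum[OF pp])
    fix k
    have "cong_Zp p ((1 / w)^k) (of_int E ^ k)"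
      by (rule cZ_pow[OF pp hi iZ Zp_int[OF pp]])
    then have "cong_Zp p (of_nat ((4*k) choose (2*k)) * (1 / w)^k) (of_nat ((4*k) choose (2*k)) * of_int E ^ k)"
      by (rule cZ_mult[OF pp cZ_refl[OF pp] _ Zp_pow[OF pp iZ] Zp_nat[OF pp]])
    then show "cong_Zp p (of_nat ((4*k) choose (2*k)) / (16 * (c^2 + 1))^k)
       (of_int (int ((4*k) choose (2*k)) * E^k))"
      unfolding w_def by (simp add: power_one_over)
  qed
  have S2Z: "(\<Sum>k = 0..p div 4. of_nat ((4*k) choose (2*k)) / (16 * (c^2 + 1))^k) \<in> Zp p"
  proof -
    have "(\<Sum>k = 0..p div 4. of_nat ((4*k) choose (2*k)) / (16 * (c^2 + 1))^k)
        = (\<Sum>k = 0..p div 4. of_nat ((4*k) choose (2*k)) * (1 / w)^k)"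
      unfolding w_def by (simp add: power_one_over)
    moreover have "(\<Sum>k = 0..p div 4. of_nat ((4*k) choose (2*k)) * (1 / w)^k) \<in> Zp p"
      by (rule Zp_sum[OF pp]) (rule Zp_mult[OF pp Zp_nat[OF pp] Zp_pow[OF pp iZ]])
    ultimately show ?thesis by simp
  qed
  have hT: "cong_Zp p ((\<Sum>k = 0..p div 4. of_nat ((4*k) choose (2*k)) * (c^2 / (16 * (c^2 + 1)))^k) *
     (\<Sum>k = 0..p div 4. of_nat ((4*k) choose (2*k)) / (16 * (c^2 + 1))^k)) (of_int T1 * of_int T2)"
    by (rule cZ_mult[OF pp S1 S2 S2Z Zp_int[OF pp]])
  have "[T1 * T2 = (2 * D)^n] (mod int p)"
    unfolding T1_def T2_def D_def n_def
    by (rule int_main[OF pp assms(2) nC nD[unfolded D_def]]) (use hE D_def in \<open>simp add: ac_simps\<close>)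
  then have hT2: "cong_Zp p (of_int (T1 * T2)) (of_int ((2 * D)^n))" by (rule cZ_int[OF pp])
  define y where "y = 2 * (c^2 + 1)"
  define a where "a = fst (quotient_of y)"
  define b where "b = snd (quotient_of y)"
  have yZ: "y \<in> Zp p" unfolding y_def using pp assms(3) by simp
  have nb: "\<not> int p dvd b" using yZ unfolding Zp_def b_def by simp
  have b0: "b > 0" unfolding b_def by (rule quotient_of_denom_pos')
  have ydiv: "y = of_int a / of_int b"
    unfolding a_def b_def using quotient_of_div[of y "fst (quotient_of y)" "snd (quotient_of y)"] by simp
  have hy: "cong_Zp p y (of_int (2 * D))"
    unfolding y_def using cZ_mult[OF pp cZ_refl[OF pp, of 2] hD] pp assms(3) by simp
  have "cong_Zp p (y * of_int b) (of_int (2 * D) * of_int b)"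
    by (rule cZ_mult[OF pp hy cZ_refl[OF pp]]) (use pp in simp_all)
  moreover have "y * of_int b = of_int a" using ydiv b0 by simp
  ultimately have "cong_Zp p (of_int a) (of_int (2 * D * b))" by simp
  then have hab: "[a = 2 * D * b] (mod int p)" by (rule cZ_int_rev[OF pp])
  have p2: "2 < p" using pp assms(2) prime_gt_1_nat[OF pp] by (cases "p = 2") auto
  have L1: "[Legendre (a * b) (int p) = (a * b) ^ n] (mod int p)"
    unfolding n_def by (rule euler_criterion[OF pp p2])
  have m1: "[(a * b) ^ n = (2 * D * b * b) ^ n] (mod int p)"
    by (intro cong_pow cong_scalar_right hab)
  have eq: "(2 * D * b * b) ^ n = (2 * D) ^ n * b ^ (p - 1)"
  proof -
    have "p - 1 = 2 * n" unfolding n_def using assms(2) by presburger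
    then show ?thesis by (simp add: power_mult_distrib power_mult power2_eq_square mult.assoc)
  qed
  have m3: "[(2 * D) ^ n * b ^ (p - 1) = (2 * D) ^ n * 1] (mod int p)"
    by (intro cong_scalar_left fermat_int[OF pp assms(2) nb])
  have "[Legendre (a * b) (int p) = (2 * D) ^ n * 1] (mod int p)"
    using cong_trans[OF cong_trans[OF L1 m1[unfolded eq]] m3] .
  then have "[Legendre (a * b) (int p) = (2 * D) ^ n] (mod int p)" by simp
  then have lg: "[(2 * D) ^ n = Legendre (a * b) (int p)] (mod int p)" by (rule cong_sym)
  have hL: "cong_Zp p (of_int ((2 * D) ^ n)) (of_int (Legendre_rat y p))"
    unfolding Legendre_rat_def a_def[symmetric] b_def[symmetric]
    by (rule cZ_int[OF pp lg])
  have "cong_Zp p (of_int T1 * of_int T2) (of_int ((2 * D) ^ n))" using hT2 by simp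
  then have "cong_Zp p (of_int T1 * of_int T2) (of_int (Legendre_rat y p))"
    by (rule cZ_trans[OF pp _ hL])
  from cZ_trans[OF pp hT this] show ?thesis unfolding y_def .
qed


end
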